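(* Let $s \geq 3$, $b \geq 1$ and $a \geq 128$ be integers and let $q$ be a prime power with $q \geq a\log q$. Let $\mathcal{H}$ be a partial linear space with point set $P$ and line set $L$ satisfying properties (i)–(v) below. Then for every $X \subseteq L$, $$\sum_{p \in P_X} |X_p| > \tfrac{1}{2}(a\log q)\,|X| - 2abq^2\log q.$$ Properties: (i) $|L| = q^2(q^2-q+1)$; (ii) $a(q^2\log q)/2 \leq |P| \leq 2aq^2\log q$; (iii) each line has at least $(a\log q)/2$ points; (iv) for any pair of lines, the number of $(s+1)$-fans containing that pair is at most $(2a\log q)^s$; (v) every set of $s+1$ pairwise intersecting lines either passes through a common point or is an $(s+1)$-fan.
   Context: A partial linear space consists of a set of points and a set of lines (sets of points) such that any two distinct lines share at most one point. For $t \geq 3$, a $t$-fan is a set of $t$ pairwise intersecting lines such that $t-1$ of them pass through a common point and the remaining one does not pass through that point. For $X \subseteq L$ and $p \in P$, $X_p$ denotes the set of lines in $X$ containing $p$, and $P_X = \{p \in P : |X_p| \geq b\}$. $\log$ is the natural logarithm. (Such $\mathcal{H}$ exists for these parameters.) *)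

theory Defs
  imports Complex_Main "HOL-Number_Theory.Prime_Powers"
begin

definition partial_linear_space :: "'p set \<Rightarrow> 'p set set \<Rightarrow> bool" where
  "partial_linear_space P L \<longleftrightarrow>
     (\<forall>l\<in>L. l \<subseteq> P) \<and>
     (\<forall>l\<in>L. \<forall>m\<in>L. l \<noteq> m \<longrightarrow> card (l \<inter> m) \<le> 1)"

definition pairwise_intersecting :: "'p set set \<Rightarrow> bool" where
  "pairwise_intersecting F \<longleftrightarrow> (\<forall>l\<in>F. \<forall>m\<in>F. l \<inter> m \<noteq> {})"

definition is_fan :: "'p set set \<Rightarrow> nat \<Rightarrow> 'p set set \<Rightarrow> bool" where
  "is_fan L t F \<longleftrightarrow> F \<subseteq> L \<and> card F = t \<and> pairwise_intersecting F \<and>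
     (\<exists>x l0. l0 \<in> F \<and> x \<notin> l0 \<and> (\<forall>l\<in>F - {l0}. x \<in> l))"

definition lines_through :: "'p set set \<Rightarrow> 'p \<Rightarrow> 'p set set" where
  "lines_through X p = {l\<in>X. p \<in> l}"

definition rich_points :: "'p set \<Rightarrow> nat \<Rightarrow> 'p set set \<Rightarrow> 'p set" where
  "rich_points P b X = {p\<in>P. card (lines_through X p) \<ge> b}"

end

theory Submission
  imports Defs
begin

lemma double_count:
  assumes "finite P" "finite X" "\<forall>l\<in>X. l \<subseteq> P"
  shows "(\<Sum>p\<in>P. card (lines_through X p)) = (\<Sum>l\<in>X. card l)"
proof -
  have "(\<Sum>p\<in>P. card (lines_through X p)) = (\<Sum>p\<in>P. \<Sum>l\<in>X. if p \<in> l then 1 else (0::nat))"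
    unfolding lines_through_def using assms by (simp add: sum.If_cases Int_def)
  also have "\<dots> = (\<Sum>l\<in>X. \<Sum>p\<in>P. if p \<in> l then 1 else (0::nat))"
    by (rule sum.swap)
  also have "\<dots> = (\<Sum>l\<in>X. card l)"
  proof (rule sum.cong[OF refl])
    fix l assume "l \<in> X"
    hence "P \<inter> l = l" using assms by auto
    thus "(\<Sum>p\<in>P. if p \<in> l then 1 else (0::nat)) = card l"
      using assms by (simp add: sum.If_cases Int_def)
  qed
  finally show ?thesis .
qed

theorem lemma4p2:
  fixes P :: "'p set" and L :: "'p set set" and s b a q :: nat
  assumes s: "s \<ge> 3" and b: "b \<ge> 1" and a: "a \<ge> 128"
    and q: "primepow q" and qlog: "real q \<ge> real a * ln (real q)"
    and pls: "partial_linear_space P L"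
    and i: "card L = q^2 * (q^2 - q + 1)"
    and ii: "real a * (real q ^ 2 * ln (real q)) / 2 \<le> real (card P)"
            "real (card P) \<le> 2 * real a * real q ^ 2 * ln (real q)"
    and iii: "\<forall>l\<in>L. real (card l) \<ge> real a * ln (real q) / 2"
    and iv: "\<forall>l1\<in>L. \<forall>l2\<in>L. l1 \<noteq> l2 \<longrightarrow>
               real (card {F. is_fan L (s+1) F \<and> l1 \<in> F \<and> l2 \<in> F})
                 \<le> (2 * real a * ln (real q)) ^ s"
    and v: "\<forall>S\<subseteq>L. card S = s + 1 \<and> pairwise_intersecting S \<longrightarrow>
               (\<exists>x. \<forall>l\<in>S. x \<in> l) \<or> is_fan L (s+1) S"
  shows "\<forall>X\<subseteq>L. (\<Sum>p\<in>rich_points P b X. real (card (lines_through X p)))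
           > real a * ln (real q) * real (card X) / 2
             - 2 * real a * real b * real q ^ 2 * ln (real q)"
proof (intro allI impI)
  fix X assume XL: "X \<subseteq> L"
  have q2: "q \<ge> 2" using q primepow_gt_Suc_0 by fastforce
  have lnq: "ln (real q) > 0" using q2 by simp
  have aq: "real a * ln (real q) > 0" using a lnq by simp
  have Ppos: "real (card P) > 0"
  proof -
    have "real a * (real q ^ 2 * ln (real q)) > 0" using a lnq q2 by simp
    thus ?thesis using ii(1) by linarith
  qed
  hence finP: "finite P" using card_ge_0_finite by (metis of_nat_0 less_irrefl card.infinite)
  have Lpos: "card L > 0" using i q2 by simp
  hence finL: "finite L" using card_ge_0_finite by blast
  hence finX: "finite X" using XL finite_subset by blast
  have lP: "\<forall>l\<in>X. l \<subseteq> P" using pls XL unfolding partial_linear_space_def by auto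
  define R where "R = rich_points P b X"
  define N where "N = P - R"
  have RP: "R \<subseteq> P" unfolding R_def rich_points_def by auto
  have total: "(\<Sum>p\<in>P. real (card (lines_through X p))) = (\<Sum>l\<in>X. real (card l))"
    using double_count[OF finP finX lP] by (metis of_nat_sum)
  have lower: "(\<Sum>l\<in>X. real (card l)) \<ge> real (card X) * (real a * ln (real q) / 2)"
  proof -
    have "(\<Sum>l\<in>X. real a * ln (real q) / 2) \<le> (\<Sum>l\<in>X. real (card l))"
      by (rule sum_mono) (use iii XL in auto)
    thus ?thesis by simp
  qed
  have split: "(\<Sum>p\<in>P. real (card (lines_through X p)))
      = (\<Sum>p\<in>R. real (card (lines_through X p))) + (\<Sum>p\<in>N. real (card (lines_through X p)))"
    unfolding N_def using finP RP by (metis sum.subset_diff add.commute)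
  have Nb: "(\<Sum>p\<in>N. real (card (lines_through X p))) \<le> (\<Sum>p\<in>N. real (b - 1))"
  proof (rule sum_mono)
    fix p assume "p \<in> N"
    hence "card (lines_through X p) < b" unfolding N_def R_def rich_points_def by auto
    thus "real (card (lines_through X p)) \<le> real (b - 1)" by simp
  qed
  have "(\<Sum>p\<in>N. real (b - 1)) = real (card N) * real (b - 1)" by simp
  also have "\<dots> \<le> real (card P) * real (b - 1)"
    using card_mono[OF finP, of N] unfolding N_def by (intro mult_right_mono) auto
  also have "\<dots> \<le> 2 * real a * real q ^ 2 * ln (real q) * real (b - 1)"
    using ii(2) by (intro mult_right_mono) auto
  also have "\<dots> < 2 * real a * real b * real q ^ 2 * ln (real q)"
  proof -
    have "2 * real a * real q ^ 2 * ln (real q) = 2 * real q ^ 2 * (real a * ln (real q))" by simp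
    moreover have "2 * real q ^ 2 * (real a * ln (real q)) > 0" using q2 aq a by (intro mult_pos_pos) auto
    ultimately have "2 * real a * real q ^ 2 * ln (real q) > 0" by linarith
    moreover have "real (b - 1) = real b - 1" using b by simp
    ultimately show ?thesis by (simp add: algebra_simps)
  qed
  finally have "(\<Sum>p\<in>N. real (card (lines_through X p))) < 2 * real a * real b * real q ^ 2 * ln (real q)"
    using Nb by linarith
  thus "(\<Sum>p\<in>rich_points P b X. real (card (lines_through X p)))
           > real a * ln (real q) * real (card X) / 2
             - 2 * real a * real b * real q ^ 2 * ln (real q)"
    using total lower split unfolding R_def[symmetric] by (simp add: algebra_simps)
qed

end
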